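(* Let $G$ be the subgroup of $\mathrm{PSL}_2(\mathbb{Z})$ freely generated by $S_0$, $S_1$ (of order $2$) and $R_2$ (of order $3$) as in the context, with characters $\alpha_0$, $\chi$. Up to isomorphism of representations, the nonsplit indecomposable rank $2$ representations $\rho$ of $G$ containing a copy of the trivial representation (i.e. nonsplit extensions $0\to1\to\rho\to\phi\to0$ of a character $\phi$ by the trivial character) are exactly the following: (1) a single extension $0\to1\to\rho\to\chi^3\to0$, given by $\rho(S_0)=\begin{pmatrix}1&1\\0&-1\end{pmatrix}$, $\rho(S_1)=\begin{pmatrix}1&0\\0&-1\end{pmatrix}$, $\rho(R_2)=\begin{pmatrix}1&0\\0&1\end{pmatrix}$; (2) for each $a\in\{1,5\}$, an infinite family of pairwise nonisomorphic representations parameterized by $\mathbb{P}^1$, arising from extensions $0\to1\to\rho\to\chi^{-a}\to0$, given for $z\in\mathbb{C}$ by $\rho(S_0)=\begin{pmatrix}1&1\\0&-1\end{pmatrix}$, $\rho(S_1)=\begin{pmatrix}1&z\\0&-1\end{pmatrix}$, $\rho(R_2)=\begin{pmatrix}1&0\\0&\zeta^a\end{pmatrix}$, and for $z=\infty$ by $\rho(S_0)=\begin{pmatrix}1&0\\0&-1\end{pmatrix}$, $\rho(S_1)=\begin{pmatrix}1&1\\0&-1\end{pmatrix}$, $\rho(R_2)=\begin{pmatrix}1&0\\0&\zeta^a\end{pmatrix}$; (3) for each $a\in\{2,4\}$, one extension $0\to1\to\rho\to\alpha_0\chi^{-a}\to0$, given by $\rho(S_0)=\begin{pmatrix}1&1\\0&-1\end{pmatrix}$,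 $\rho(S_1)=\begin{pmatrix}1&0\\0&1\end{pmatrix}$, $\rho(R_2)=\begin{pmatrix}1&0\\0&\zeta^a\end{pmatrix}$; (4) for each $a\in\{1,5\}$, one extension $0\to1\to\rho\to\alpha_0\chi^{-a}\to0$, given by $\rho(S_0)=\begin{pmatrix}1&0\\0&1\end{pmatrix}$, $\rho(S_1)=\begin{pmatrix}1&1\\0&-1\end{pmatrix}$, $\rho(R_2)=\begin{pmatrix}1&0\\0&\zeta^a\end{pmatrix}$.
   Context: Let $T=\begin{pmatrix}1&1\\0&1\end{pmatrix}$, $S=\begin{pmatrix}0&-1\\1&0\end{pmatrix}$, $R=ST$ in $\mathrm{PSL}_2(\mathbb{Z})$, and $\zeta=e^{2\pi i/3}$. $G$ is the index-$4$ subgroup of $\mathrm{PSL}_2(\mathbb{Z})$ generated by the principal congruence subgroup $\Gamma(4)$ together with $S$ and $\begin{pmatrix}1&1\\1&2\end{pmatrix}$; it is freely generated by $S_0=S$, $S_1=T^3ST^{-3}$ and $R_2=T^2RT^{-2}=T^2ST^{-1}$, with $S_0^2=S_1^2=R_2^3=1$. Characters of $G$: $\alpha_0(S_0)=-1$, $\alpha_0(S_1)=\alpha_0(R_2)=1$; $\alpha_1(S_1)=-1$, $\alpha_1(S_0)=\alpha_1(R_2)=1$; $\alpha_2(R_2)=\zeta$, $\alpha_2(S_0)=\alpha_2(S_1)=1$. $\chi$ is the restriction to $G$ of the character of $\mathrm{PSL}_2(\mathbb{Z})$ with $\chi(T)=e^{2\pi i/6}$ (so $\chi(S)=-1$, $\chi(R)=\zeta^2$);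 on $G$, $\chi=\alpha_0\alpha_1\alpha_2^2$. $1$ denotes the trivial character. Matrices are written in a basis whose first vector spans the trivial subrepresentation. *)

theory Defs
  imports "HOL-Analysis.Analysis"
begin

text \<open>2x2 complex matrices acting on column vectors in complex^2.
  Row index first: X $ i $ j is the (i,j) entry.\<close>
type_synonym cmat = "complex^2^2"

definition mat2 :: "complex \<Rightarrow> complex \<Rightarrow> complex \<Rightarrow> complex \<Rightarrow> cmat" where
  "mat2 a b c d = (\<chi> i j. if i = 1 then (if j = 1 then a else b) else (if j = 1 then c else d))"

definition zeta :: complex where "zeta = cis (2 * pi / 3)"

text \<open>G is freely generated by S0, S1 (order 2) and R2 (order 3), i.e. it is the free
  product Z/2 * Z/2 * Z/3.  By the universal property, a rank 2 complex representation
  of G is the same as a triple (rho(S0), rho(S1), rho(R2)) of 2x2 complex matrices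
  satisfying the defining relations.\<close>
type_synonym rep = "cmat \<times> cmat \<times> cmat"

definition is_rep :: "rep \<Rightarrow> bool" where
  "is_rep \<rho> = (case \<rho> of (A, B, C) \<Rightarrow>
      A ** A = mat 1 \<and> B ** B = mat 1 \<and> C ** C ** C = mat 1)"

definition iso_rep :: "rep \<Rightarrow> rep \<Rightarrow> bool" where
  "iso_rep \<rho> \<sigma> = (case \<rho> of (A, B, C) \<Rightarrow> case \<sigma> of (A', B', C') \<Rightarrow>
      (\<exists>P :: cmat. invertible P \<and> P ** A = A' ** P \<and> P ** B = B' ** P \<and> P ** C = C' ** P))"

definition has_trivial_sub :: "rep \<Rightarrow> bool" where
  "has_trivial_sub \<rho> = (case \<rho> of (A, B, C) \<Rightarrow>
      (\<exists>v :: complex^2. v \<noteq> 0 \<and> A *v v = v \<and> B *v v = v \<and> C *v v = v))"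

definition is_diag :: "cmat \<Rightarrow> bool" where
  "is_diag X = (X $ 1 $ 2 = 0 \<and> X $ 2 $ 1 = 0)"

text \<open>rho (of rank 2) is decomposable: it is the direct sum of two one-dimensional
  subrepresentations, i.e. in some basis all generators act diagonally.\<close>
definition decomposable :: "rep \<Rightarrow> bool" where
  "decomposable \<rho> = (case \<rho> of (A, B, C) \<Rightarrow>
      (\<exists>P :: cmat. invertible P \<and> is_diag (matrix_inv P ** A ** P)
         \<and> is_diag (matrix_inv P ** B ** P) \<and> is_diag (matrix_inv P ** C ** P)))"

definition nonsplit_ext_of_trivial :: "rep \<Rightarrow> bool" where
  "nonsplit_ext_of_trivial \<rho> = (is_rep \<rho> \<and> has_trivial_sub \<rho> \<and> \<not> decomposable \<rho>)"

text \<open>Characters of G, recorded by their values on (S0, S1, R2).\<close>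
type_synonym gchar = "complex \<times> complex \<times> complex"

definition char_mult :: "gchar \<Rightarrow> gchar \<Rightarrow> gchar" where
  "char_mult \<phi> \<psi> = (case \<phi> of (x0, x1, x2) \<Rightarrow> case \<psi> of (y0, y1, y2) \<Rightarrow>
      (x0 * y0, x1 * y1, x2 * y2))"

definition char_powi :: "gchar \<Rightarrow> int \<Rightarrow> gchar" where
  "char_powi \<phi> k = (case \<phi> of (x0, x1, x2) \<Rightarrow> (x0 powi k, x1 powi k, x2 powi k))"

definition alpha0 :: gchar where "alpha0 = (-1, 1, 1)"
definition alpha1 :: gchar where "alpha1 = (1, -1, 1)"
definition alpha2 :: gchar where "alpha2 = (1, 1, zeta)"

text \<open>chi restricted to G equals alpha0 * alpha1 * alpha2^2.\<close>
definition chiG :: gchar where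
  "chiG = char_mult (char_mult alpha0 alpha1) (char_powi alpha2 2)"

text \<open>rho is an extension 0 -> 1 -> rho -> phi -> 0 written in a basis whose first vector
  spans the trivial subrepresentation: all generators are upper triangular with
  (1,1)-entry 1 and (2,2)-entry the value of phi.\<close>
definition ext_in_basis :: "rep \<Rightarrow> gchar \<Rightarrow> bool" where
  "ext_in_basis \<rho> \<phi> = (case \<rho> of (A, B, C) \<Rightarrow> case \<phi> of (p0, p1, p2) \<Rightarrow>
      A $ 1 $ 1 = 1 \<and> A $ 2 $ 1 = 0 \<and> A $ 2 $ 2 = p0 \<and>
      B $ 1 $ 1 = 1 \<and> B $ 2 $ 1 = 0 \<and> B $ 2 $ 2 = p1 \<and>
      C $ 1 $ 1 = 1 \<and> C $ 2 $ 1 = 0 \<and> C $ 2 $ 2 = p2)"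

text \<open>Indices of the list in the proposition.  Fam2 a None is the point z = infinity.\<close>
datatype idx = Case1 | Case2 nat "complex option" | Case3 nat | Case4 nat

definition valid_idx :: "idx \<Rightarrow> bool" where
  "valid_idx i = (case i of Case1 \<Rightarrow> True
     | Case2 a _ \<Rightarrow> a \<in> {1, 5}
     | Case3 a \<Rightarrow> a \<in> {2, 4}
     | Case4 a \<Rightarrow> a \<in> {1, 5})"

fun listed_rep :: "idx \<Rightarrow> rep" where
  "listed_rep Case1 = (mat2 1 1 0 (-1), mat2 1 0 0 (-1), mat2 1 0 0 1)"
| "listed_rep (Case2 a (Some z)) = (mat2 1 1 0 (-1), mat2 1 z 0 (-1), mat2 1 0 0 (zeta ^ a))"
| "listed_rep (Case2 a None) = (mat2 1 0 0 (-1), mat2 1 1 0 (-1), mat2 1 0 0 (zeta ^ a))"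
| "listed_rep (Case3 a) = (mat2 1 1 0 (-1), mat2 1 0 0 1, mat2 1 0 0 (zeta ^ a))"
| "listed_rep (Case4 a) = (mat2 1 0 0 1, mat2 1 1 0 (-1), mat2 1 0 0 (zeta ^ a))"

fun listed_quot :: "idx \<Rightarrow> gchar" where
  "listed_quot Case1 = char_powi chiG 3"
| "listed_quot (Case2 a _) = char_powi chiG (- int a)"
| "listed_quot (Case3 a) = char_mult alpha0 (char_powi chiG (- int a))"
| "listed_quot (Case4 a) = char_mult alpha0 (char_powi chiG (- int a))"

end

theory Submission
  imports Defs
begin


lemma zeta_eq: "zeta = Complex (-1/2) (sqrt 3 / 2)"
  unfolding zeta_def by (simp add: complex_eq_iff cos_120 sin_120)

lemma zeta_sq: "zeta^2 = Complex (-1/2) (- sqrt 3 / 2)"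
  unfolding zeta_eq by (simp add: power2_eq_square complex_eq_iff)

lemma zeta_sum: "1 + zeta + zeta^2 = 0"
  unfolding zeta_sq by (simp add: zeta_eq complex_eq_iff)

lemma zeta3: "zeta^3 = 1"
proof -
  have "zeta^3 - 1 = (zeta - 1) * (1 + zeta + zeta^2)" by (simp add: algebra_simps power2_eq_square power3_eq_cube)
  then show ?thesis using zeta_sum by simp
qed

lemma zeta_ne1: "zeta \<noteq> 1" by (simp add: zeta_eq complex_eq_iff)
lemma zeta2_ne1: "zeta^2 \<noteq> 1" by (simp add: zeta_sq complex_eq_iff)
lemma zeta_ne_zeta2: "zeta \<noteq> zeta^2" unfolding zeta_sq by (simp add: zeta_eq complex_eq_iff)
lemma zeta_nem1: "zeta \<noteq> -1" by (simp add: zeta_eq complex_eq_iff)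
lemma zeta2_nem1: "zeta^2 \<noteq> -1" by (simp add: zeta_sq complex_eq_iff)
lemma zeta4: "zeta^4 = zeta" using zeta3 by (metis power_Suc power_one_right numeral_eq_Suc mult_1 Suc_numeral semiring_norm(2,8) numeral_One power_add mult.commute add_One_commute)
lemma zeta5: "zeta^5 = zeta^2" proof - have "zeta^5 = zeta^3 * zeta^2" by (simp flip: power_add) then show ?thesis using zeta3 by simp qed
lemma zeta_nz: "zeta \<noteq> 0" by (simp add: zeta_eq complex_eq_iff)

lemma cube_root: assumes "(g::complex)^3 = 1" shows "g = 1 \<or> g = zeta \<or> g = zeta^2"
proof -
  have "(g - 1) * (g - zeta) * (g - zeta^2) = g^3 - (1 + zeta + zeta^2) * g^2 + zeta * (1 + zeta + zeta^2) * g - zeta^3"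
    by (simp add: algebra_simps power2_eq_square power3_eq_cube)
  also have "\<dots> = 0" using assms zeta_sum zeta3 by simp
  finally show ?thesis by auto
qed

lemma two_ne_one: "(2::2) \<noteq> 1" by simp

lemma mat2_nth: "mat2 a b c d $ 1 $ 1 = a" "mat2 a b c d $ 1 $ 2 = b" "mat2 a b c d $ 2 $ 1 = c" "mat2 a b c d $ 2 $ 2 = d"
  by (simp_all add: mat2_def)

lemma cmat_expand: "X = mat2 (X$1$1) (X$1$2) (X$2$1) (X$2$2)"
  unfolding mat2_def vec_eq_iff forall_2 by simp

lemma mat2_eq: "mat2 a b c d = mat2 e f g h \<longleftrightarrow> a = e \<and> b = f \<and> c = g \<and> d = h"
  by (metis mat2_nth)

lemma mat2_mult: "mat2 a b c d ** mat2 e f g h = mat2 (a*e+b*g) (a*f+b*h) (c*e+d*g) (c*f+d*h)"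
  unfolding matrix_matrix_mult_def vec_eq_iff forall_2 by (simp add: sum_2 mat2_nth)

lemma mat1_eq: "mat 1 = mat2 1 0 0 1"
  unfolding mat2_def mat_def vec_eq_iff forall_2 by simp



definition ev1 :: "complex^2" where "ev1 = (\<chi> i. if i = 1 then 1 else 0)"

lemma ev1_nz: "ev1 \<noteq> 0" unfolding ev1_def vec_eq_iff by auto

lemma mulv_ev1: "X *v ev1 = (\<chi> i. X $ i $ 1)"
  unfolding ev1_def matrix_vector_mult_def vec_eq_iff by (simp add: sum_2)

lemma mat2_mulv_ev1_eq: "mat2 a b c d *v ev1 = ev1 \<longleftrightarrow> a = 1 \<and> c = 0"
  apply (subst mulv_ev1) unfolding ev1_def vec_eq_iff forall_2 by (simp add: mat2_nth)

lemma matrix_inv_props: assumes "invertible (P::cmat)"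
  shows "P ** matrix_inv P = mat 1" "matrix_inv P ** P = mat 1"
  using someI_ex[OF assms[unfolded invertible_def]] unfolding matrix_inv_def by auto

lemma is_diag_mat2: "is_diag X \<Longrightarrow> X = mat2 (X$1$1) 0 0 (X$2$2)"
  unfolding is_diag_def by (subst cmat_expand) simp

lemma diag_comm: "is_diag X \<Longrightarrow> is_diag Y \<Longrightarrow> X ** Y = Y ** X"
proof -
  assume "is_diag X" "is_diag Y"
  then obtain a b c d where "X = mat2 a 0 0 b" "Y = mat2 c 0 0 d" using is_diag_mat2 by metis
  then show ?thesis by (simp add: mat2_mult mult.commute)
qed

lemma conj_comm:
  fixes P Q X Y :: cmat
  assumes PQ: "P ** Q = mat 1" and QP: "Q ** P = mat 1"
    and c: "(Q ** X ** P) ** (Q ** Y ** P) = (Q ** Y ** P) ** (Q ** X ** P)"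
  shows "X ** (Y::cmat) = Y ** X"
proof -
  have r1: "M ** Q ** P = M" for M :: cmat by (simp add: QP flip: matrix_mul_assoc)
  have r2: "M ** P ** Q = M" for M :: cmat by (simp add: PQ flip: matrix_mul_assoc)
  have e: "Q ** X ** Y ** P = Q ** Y ** X ** P" using c by (simp add: matrix_mul_assoc r2)
  have "X ** Y = P ** (Q ** X ** Y ** P) ** Q" by (simp add: matrix_mul_assoc PQ r2)
  also have "\<dots> = P ** (Q ** Y ** X ** P) ** Q" using e by simp
  also have "\<dots> = Y ** X" by (simp add: matrix_mul_assoc PQ r2)
  finally show ?thesis .
qed

lemma decomp_comm: assumes "decomposable (A, B, C)"
  shows "A ** B = B ** A" "A ** C = C ** A" "B ** C = C ** B"
proof -
  obtain P where P: "invertible P" "is_diag (matrix_inv P ** A ** P)"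
      "is_diag (matrix_inv P ** B ** P)" "is_diag (matrix_inv P ** C ** P)"
    using assms unfolding decomposable_def by auto
  note i = matrix_inv_props[OF P(1)]
  show "A ** B = B ** A" by (rule conj_comm[OF i]) (rule diag_comm; fact)
  show "A ** C = C ** A" by (rule conj_comm[OF i]) (rule diag_comm; fact)
  show "B ** C = C ** B" by (rule conj_comm[OF i]) (rule diag_comm; fact)
qed

lemma ut_noncomm: "mat2 1 x 0 d ** mat2 1 0 0 g = mat2 1 0 0 g ** mat2 1 x 0 d \<Longrightarrow> x * (g - 1) = 0"
  by (simp add: mat2_mult mat2_eq algebra_simps)

lemma zpow3: "(zeta ^ a) ^ 3 = 1"
  by (metis power_mult mult.commute power_one zeta3)

lemma zeta_a_ne1: "a \<in> {1,2,4,5::nat} \<Longrightarrow> zeta ^ a \<noteq> 1"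
  using zeta_ne1 zeta2_ne1 zeta4 zeta5 by auto

lemma rep_ut: "x * (1 + d) = 0 \<Longrightarrow> d * d = 1 \<Longrightarrow> mat2 1 x 0 d ** mat2 1 x 0 d = mat 1"
  by (simp add: mat2_mult mat1_eq mat2_eq algebra_simps)

lemma rep_C: "g ^ 3 = 1 \<Longrightarrow> mat2 1 0 0 g ** mat2 1 0 0 g ** mat2 1 0 0 g = mat 1"
  unfolding mat2_mult mat1_eq mat2_eq 
  apply simp
  by (metis power3_eq_cube)


lemma chiG_eq: "chiG = (-1, -1, zeta^2)"
  unfolding chiG_def char_mult_def char_powi_def alpha0_def alpha1_def alpha2_def by simp

lemma zeta_inv: "inverse (zeta^2) = zeta"
proof (rule inverse_unique)
  show "zeta^2 * zeta = 1" using zeta3 by (simp add: power2_eq_square power3_eq_cube)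
qed

lemma zeta2_powi: "(zeta^2) powi (- int a) = zeta ^ a"
proof -
  have "(zeta^2) powi (- int a) = inverse ((zeta^2) powi (int a))" by (rule power_int_minus)
  also have "\<dots> = inverse ((zeta^2) ^ a)" by (simp only: power_int_of_nat)
  also have "\<dots> = (inverse (zeta^2)) ^ a" by (rule power_inverse[symmetric])
  finally show ?thesis by (simp only: zeta_inv)
qed

lemma m1_powi: "(-1::complex) powi (- int a) = (-1) ^ a"
proof -
  have "(-1::complex) powi (- int a) = inverse ((-1) powi (int a))" by (rule power_int_minus)
  also have "\<dots> = inverse ((-1::complex) ^ a)" by (simp only: power_int_of_nat)
  also have "\<dots> = (inverse (-1::complex)) ^ a" by (rule power_inverse[symmetric])
  finally show ?thesis by simp
qed

lemma quot_neg: "char_powi chiG (- int a) = ((-1)^a, (-1)^a, zeta^a)"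
  unfolding chiG_eq char_powi_def by (simp add: zeta2_powi m1_powi)

lemma quot3: "char_powi chiG 3 = (-1, -1, 1)"
proof -
  have "(zeta^2) powi 3 = (1::complex)"
    using zeta3 by (metis power_int_numeral mult.commute power_mult power_one)
  then show ?thesis unfolding chiG_eq char_powi_def by simp
qed

lemma trivial_ev1: "mat2 1 x 0 d *v ev1 = ev1" by (simp add: mat2_mulv_ev1_eq)

lemma nonsplit_gen:
  assumes "x1 * (1 + d1) = 0" "d1 * d1 = 1" "x2 * (1 + d2) = 0" "d2 * d2 = 1" "g^3 = 1"
    and "\<not> (mat2 1 x1 0 d1 ** mat2 1 x2 0 d2 = mat2 1 x2 0 d2 ** mat2 1 x1 0 d1 \<and>
            mat2 1 x1 0 d1 ** mat2 1 0 0 g = mat2 1 0 0 g ** mat2 1 x1 0 d1 \<and>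
            mat2 1 x2 0 d2 ** mat2 1 0 0 g = mat2 1 0 0 g ** mat2 1 x2 0 d2)"
  shows "nonsplit_ext_of_trivial (mat2 1 x1 0 d1, mat2 1 x2 0 d2, mat2 1 0 0 g)"
proof -
  have "is_rep (mat2 1 x1 0 d1, mat2 1 x2 0 d2, mat2 1 0 0 g)"
    unfolding is_rep_def prod.case using assms(1-5) rep_ut rep_C by blast
  moreover have "has_trivial_sub (mat2 1 x1 0 d1, mat2 1 x2 0 d2, mat2 1 0 0 g)"
    unfolding has_trivial_sub_def prod.case using trivial_ev1 ev1_nz by blast
  moreover have "\<not> decomposable (mat2 1 x1 0 d1, mat2 1 x2 0 d2, mat2 1 0 0 g)"
    using decomp_comm assms(6) by blast
  ultimately show ?thesis unfolding nonsplit_ext_of_trivial_def by blast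
qed

lemma noncomm_iff: "mat2 1 x 0 d ** mat2 1 0 0 g = mat2 1 0 0 g ** mat2 1 x 0 d \<longleftrightarrow> x * (g - 1) = 0"
  by (simp add: mat2_mult mat2_eq algebra_simps)

lemma c1: "ext_in_basis (listed_rep Case1) (listed_quot Case1)"
  unfolding ext_in_basis_def listed_rep.simps listed_quot.simps quot3 
  by (simp only: prod.case mat2_nth)
lemma c2n: "(-1::complex)^a = -1 \<Longrightarrow> ext_in_basis (listed_rep (Case2 a None)) (listed_quot (Case2 a None))"
  unfolding ext_in_basis_def listed_rep.simps listed_quot.simps quot_neg
  by (simp only: prod.case mat2_nth; simp)
lemma c2s: "(-1::complex)^a = -1 \<Longrightarrow> ext_in_basis (listed_rep (Case2 a (Some z))) (listed_quot (Case2 a (Some z)))"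
  unfolding ext_in_basis_def listed_rep.simps listed_quot.simps quot_neg
  by (simp only: prod.case mat2_nth; simp)
lemma c3: "(-1::complex)^a = 1 \<Longrightarrow> ext_in_basis (listed_rep (Case3 a)) (listed_quot (Case3 a))"
  unfolding ext_in_basis_def listed_rep.simps listed_quot.simps quot_neg char_mult_def alpha0_def
  by (simp only: prod.case mat2_nth; simp)
lemma c4: "(-1::complex)^a = -1 \<Longrightarrow> ext_in_basis (listed_rep (Case4 a)) (listed_quot (Case4 a))"
  unfolding ext_in_basis_def listed_rep.simps listed_quot.simps quot_neg char_mult_def alpha0_def
  by (simp only: prod.case mat2_nth; simp)

lemma part1: assumes "valid_idx i"
  shows "nonsplit_ext_of_trivial (listed_rep i) \<and> ext_in_basis (listed_rep i) (listed_quot i)"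
proof (cases i)
  case Case1
  have "nonsplit_ext_of_trivial (listed_rep i)"
    unfolding Case1 listed_rep.simps
    apply (rule nonsplit_gen) by (simp_all add: mat2_mult mat2_eq)
  then show ?thesis unfolding Case1 using c1 by blast
next
  case (Case2 a zo)
  have a: "a \<in> {1,5}" using assms Case2 by (simp add: valid_idx_def)
  then have za: "zeta ^ a \<noteq> 1" "(zeta^a)^3 = 1" "(-1::complex)^a = -1" using zeta_a_ne1 zpow3 by auto
  show ?thesis
  proof (cases zo)
    case None
    have "nonsplit_ext_of_trivial (listed_rep i)"
      unfolding Case2 None listed_rep.simps
      apply (rule nonsplit_gen) using za by (simp_all add: mat2_mult mat2_eq)
    then show ?thesis using c2n[OF za(3)] unfolding Case2 None by blast
  next
    case (Some z)
    have "nonsplit_ext_of_trivial (listed_rep i)"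
      unfolding Case2 Some listed_rep.simps
      apply (rule nonsplit_gen) using za by (simp_all add: mat2_mult mat2_eq)
    then show ?thesis using c2s[OF za(3)] unfolding Case2 Some by blast
  qed
next
  case (Case3 a)
  have a: "a \<in> {2,4}" using assms Case3 by (simp add: valid_idx_def)
  then have za: "zeta ^ a \<noteq> 1" "(zeta^a)^3 = 1" "(-1::complex)^a = 1" using zeta_a_ne1 zpow3 by auto
  have "nonsplit_ext_of_trivial (listed_rep i)"
    unfolding Case3 listed_rep.simps
    apply (rule nonsplit_gen) using za by (simp_all add: mat2_mult mat2_eq)
  then show ?thesis using c3[OF za(3)] unfolding Case3 by blast
next
  case (Case4 a)
  have a: "a \<in> {1,5}" using assms Case4 by (simp add: valid_idx_def)
  then have za: "zeta ^ a \<noteq> 1" "(zeta^a)^3 = 1" "(-1::complex)^a = -1" using zeta_a_ne1 zpow3 by auto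
  have "nonsplit_ext_of_trivial (listed_rep i)"
    unfolding Case4 listed_rep.simps
    apply (rule nonsplit_gen) using za by (simp_all add: mat2_mult mat2_eq)
  then show ?thesis using c4[OF za(3)] unfolding Case4 by blast
qed



lemma invertible_det: "invertible (P::cmat) \<Longrightarrow> P$1$1 * P$2$2 - P$1$2 * P$2$1 \<noteq> 0"
  using invertible_det_nz det_2 by metis

lemma iso_ut:
  assumes d: "p * s - q * r \<noteq> 0" and e: "mat2 p q r s ** mat2 1 x 0 d = mat2 1 y 0 e ** mat2 p q r s"
  shows "d = e"
proof -
  from e have e1: "y * r = 0" "r = e * r" "r * x + s * d = e * s" "p * x + q * d = q + y * s"
    by (simp_all add: mat2_mult mat2_eq algebra_simps)
  show ?thesis
  proof (cases "r = 0")
    case True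
    then have "s \<noteq> 0" using d by auto
    moreover have "s * (d - e) = 0" using e1(3) True by (simp add: algebra_simps)
    ultimately show ?thesis by simp
  next
    case False
    have "(1 - e) * r = 0" using e1(2) by (simp add: algebra_simps)
    then have "e = 1" using False by simp
    have "y = 0" using e1(1) False by simp
    have rx: "r * x = s - s * d" using e1(3) \<open>e = 1\<close> by (simp add: algebra_simps)
    have px: "p * x = q - q * d" using e1(4) \<open>y = 0\<close> by (simp add: algebra_simps)
    have "(1 - d) * (p * s - q * r) = p * (s - s * d) - r * (q - q * d)" by (simp add: algebra_simps)
    also have "\<dots> = p * (r * x) - r * (p * x)" by (simp only: rx px)
    also have "\<dots> = 0" by (simp add: algebra_simps)
    finally show ?thesis using d \<open>e = 1\<close> by simp
  qed
qed

lemma iso_diag: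
  assumes e: "mat2 p q r s ** mat2 1 0 0 g = mat2 1 0 0 g ** mat2 p q r s" and g: "g \<noteq> 1"
  shows "q = 0 \<and> r = 0"
proof -
  from e have "q * g = q" "r = g * r" by (simp_all add: mat2_mult mat2_eq)
  then have "q * (g - 1) = 0" "r * (g - 1) = 0" by (simp_all add: algebra_simps)
  then show ?thesis using g by simp
qed

lemma iso3:
  assumes "iso_rep (mat2 1 x1 0 d1, mat2 1 x2 0 d2, mat2 1 0 0 d3) (mat2 1 y1 0 e1, mat2 1 y2 0 e2, mat2 1 0 0 e3)"
  shows "d1 = e1 \<and> d2 = e2 \<and> d3 = e3 \<and> (d3 \<noteq> 1 \<longrightarrow> (\<exists>p s. p \<noteq> 0 \<and> s \<noteq> 0 \<and> p * x1 = y1 * s \<and> p * x2 = y2 * s))"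
proof -
  obtain P where P: "invertible P" "P ** mat2 1 x1 0 d1 = mat2 1 y1 0 e1 ** P"
    "P ** mat2 1 x2 0 d2 = mat2 1 y2 0 e2 ** P" "P ** mat2 1 0 0 d3 = mat2 1 0 0 e3 ** P"
    using assms unfolding iso_rep_def by auto
  obtain p q r s where Pe: "P = mat2 p q r s" using cmat_expand by metis
  have d: "p * s - q * r \<noteq> 0" using invertible_det[OF P(1)] unfolding Pe mat2_nth .
  have 1: "d1 = e1" using iso_ut[OF d] P(2) Pe by simp
  have 2: "d2 = e2" using iso_ut[OF d] P(3) Pe by simp
  have 3: "d3 = e3" using iso_ut[OF d] P(4) Pe by simp
  have 4: "\<exists>p s. p \<noteq> 0 \<and> s \<noteq> 0 \<and> p * x1 = y1 * s \<and> p * x2 = y2 * s" if "d3 \<noteq> 1"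
  proof -
    have "q = 0 \<and> r = 0" using iso_diag[of p q r s d3] P(4) Pe 3 that by simp
    then have qr: "q = 0" "r = 0" by auto
    have "p * x1 = y1 * s" using P(2) unfolding Pe qr by (simp add: mat2_mult mat2_eq mult.commute)
    moreover have "p * x2 = y2 * s" using P(3) unfolding Pe qr by (simp add: mat2_mult mat2_eq mult.commute)
    ultimately show ?thesis using d qr by auto
  qed
  show ?thesis using 1 2 3 4 by blast
qed


lemma idx_cases:
  obtains "i = Case1" | a z where "i = Case2 a (Some z)" | a where "i = Case2 a None"
    | a where "i = Case3 a" | a where "i = Case4 a"
  by (metis idx.exhaust option.exhaust)

lemma zeta_facts: "zeta \<noteq> 1" "zeta^2 \<noteq> 1" "zeta \<noteq> zeta^2" "zeta^2 \<noteq> zeta" "1 \<noteq> zeta" "1 \<noteq> zeta^2"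
  "zeta^4 = zeta" "zeta^5 = zeta^2" "(-1::complex) \<noteq> 1" "(1::complex) \<noteq> -1"
  using zeta_ne1 zeta2_ne1 zeta_ne_zeta2 zeta4 zeta5 by auto

lemma part3:
  assumes "valid_idx i" "valid_idx j" "iso_rep (listed_rep i) (listed_rep j)" shows "i = j"
  using assms
  apply (cases i rule: idx_cases; cases j rule: idx_cases)
  apply (simp_all only: listed_rep.simps)
  apply (drule iso3; auto simp: valid_idx_def zeta_facts)+
  done



lemma sq1: "(x::complex) * x = 1 \<Longrightarrow> x = 1 \<or> x = -1"
proof -
  assume "x * x = 1"
  then have "(x - 1) * (x + 1) = 0" by (simp add: algebra_simps)
  then have "x - 1 = 0 \<or> x + 1 = 0" by simp
  then show ?thesis by (auto simp: eq_neg_iff_add_eq_0)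
qed

definition offd :: "complex \<Rightarrow> complex \<Rightarrow> complex \<Rightarrow> complex \<Rightarrow> complex" where
  "offd p s x l = p * (1 - l) + x * s"

definition good :: "complex \<Rightarrow> complex \<Rightarrow> complex \<Rightarrow> complex \<Rightarrow> complex \<Rightarrow> complex \<Rightarrow> bool" where
  "good a al b be c ga = (\<exists>p s. s \<noteq> 0 \<and>
     ((\<exists>i. valid_idx i \<and> listed_rep i = (mat2 1 (offd p s a al) 0 al, mat2 1 (offd p s b be) 0 be, mat2 1 (offd p s c ga) 0 ga))
      \<or> (offd p s a al = 0 \<and> offd p s b be = 0 \<and> offd p s c ga = 0)))"

lemma good_split_ne1:
  assumes g: "ga = zeta \<or> ga = zeta^2" and al: "al = 1 \<or> al = -1" and be: "be = 1 \<or> be = -1"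
    and a: "a * (1 + al) = 0" and b: "b * (1 + be) = 0"
  shows "good a al b be c ga"
proof -
  have g1: "ga \<noteq> 1" using g zeta_ne1 zeta2_ne1 by auto
  define k where "k = c / (ga - 1)"
  have kc: "offd (k * s) s c ga = 0" for s unfolding offd_def k_def using g1
    by (simp add: field_simps)
  define a0 where "a0 = k * (1 - al) + a"
  define b0 where "b0 = k * (1 - be) + b"
  have oa: "offd (k * s) s a al = s * a0" for s by (simp add: offd_def a0_def algebra_simps)
  have ob: "offd (k * s) s b be = s * b0" for s by (simp add: offd_def b0_def algebra_simps)
  define g2 :: nat where "g2 = (if ga = zeta then 1 else 5)"
  define g3 :: nat where "g3 = (if ga = zeta then 4 else 2)"
  have g2v: "g2 \<in> {1,5}" "zeta ^ g2 = ga" using g zeta5 by (auto simp: g2_def)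
  have g3v: "g3 \<in> {2,4}" "zeta ^ g3 = ga" using g zeta4 zeta_ne_zeta2 by (auto simp: g3_def)
  have diag: "good a al b be c ga" if "a0 = 0" "b0 = 0"
    unfolding good_def using kc[of 1] oa[of 1] ob[of 1] that by (intro exI[of _ k] exI[of _ 1]) auto
  show ?thesis
  proof (cases "al = -1")
    case alm: True
    show ?thesis
    proof (cases "be = -1")
      case bem: True
      show ?thesis
      proof (cases "a0 = 0")
        case False
        let ?s = "1 / a0"
        have "valid_idx (Case2 g2 (Some (b0 / a0))) \<and> listed_rep (Case2 g2 (Some (b0 / a0))) =
            (mat2 1 (offd (k * ?s) ?s a al) 0 al, mat2 1 (offd (k * ?s) ?s b be) 0 be, mat2 1 (offd (k * ?s) ?s c ga) 0 ga)"
          unfolding kc oa ob using False g2v alm bem by (simp add: valid_idx_def)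
        then show ?thesis unfolding good_def using False by (intro exI[of _ "k * ?s"] exI[of _ ?s]) auto
      next
        case a00: True
        show ?thesis
        proof (cases "b0 = 0")
          case False
          let ?s = "1 / b0"
          have "valid_idx (Case2 g2 None) \<and> listed_rep (Case2 g2 None) =
              (mat2 1 (offd (k * ?s) ?s a al) 0 al, mat2 1 (offd (k * ?s) ?s b be) 0 be, mat2 1 (offd (k * ?s) ?s c ga) 0 ga)"
            unfolding kc oa ob using False a00 g2v alm bem by (simp add: valid_idx_def)
          then show ?thesis unfolding good_def using False by (intro exI[of _ "k * ?s"] exI[of _ ?s]) auto
        qed (use diag a00 in auto)
      qed
    next
      case False
      then have bep: "be = 1" using be by auto
      then have b00: "b0 = 0" using b by (simp add: b0_def algebra_simps)
      show ?thesis
      proof (cases "a0 = 0")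
        case False
        let ?s = "1 / a0"
        have "valid_idx (Case3 g3) \<and> listed_rep (Case3 g3) =
            (mat2 1 (offd (k * ?s) ?s a al) 0 al, mat2 1 (offd (k * ?s) ?s b be) 0 be, mat2 1 (offd (k * ?s) ?s c ga) 0 ga)"
          unfolding kc oa ob using False g3v alm bep b00 by (simp add: valid_idx_def)
        then show ?thesis unfolding good_def using False by (intro exI[of _ "k * ?s"] exI[of _ ?s]) auto
      qed (use diag b00 in auto)
    qed
  next
    case False
    then have alp: "al = 1" using al by auto
    then have a00: "a0 = 0" using a by (simp add: a0_def algebra_simps)
    show ?thesis
    proof (cases "be = -1")
      case bem: True
      show ?thesis
      proof (cases "b0 = 0")
        case False
        let ?s = "1 / b0"
        have "valid_idx (Case4 g2) \<and> listed_rep (Case4 g2) =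
            (mat2 1 (offd (k * ?s) ?s a al) 0 al, mat2 1 (offd (k * ?s) ?s b be) 0 be, mat2 1 (offd (k * ?s) ?s c ga) 0 ga)"
          unfolding kc oa ob using False g2v alp bem a00 by (simp add: valid_idx_def)
        then show ?thesis unfolding good_def using False by (intro exI[of _ "k * ?s"] exI[of _ ?s]) auto
      qed (use diag a00 in auto)
    next
      case False
      then have "be = 1" using be by auto
      then have "b0 = 0" using b by (simp add: b0_def algebra_simps)
      then show ?thesis using diag a00 by auto
    qed
  qed
qed


lemma good_1:
  assumes al: "al = 1 \<or> al = -1" and be: "be = 1 \<or> be = -1"
    and a: "a * (1 + al) = 0" and b: "b * (1 + be) = 0" and c: "c = 0"
  shows "good a al b be c 1"
proof (cases "be = -1")
  case bem: True
  have ob: "offd (- b * s / 2) s b be = 0" for s using bem by (simp add: offd_def)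
  have oc: "offd p s c 1 = 0" for p s using c by (simp add: offd_def)
  show ?thesis
  proof (cases "al = -1")
    case alm: True
    have oa: "offd (- b * s / 2) s a al = s * (a - b)" for s using alm by (simp add: offd_def algebra_simps)
    show ?thesis
    proof (cases "a = b")
      case False
      let ?s = "1 / (a - b)"
      have "valid_idx Case1 \<and> listed_rep Case1 =
          (mat2 1 (offd (- b * ?s / 2) ?s a al) 0 al, mat2 1 (offd (- b * ?s / 2) ?s b be) 0 be, mat2 1 (offd (- b * ?s / 2) ?s c 1) 0 1)"
        unfolding oa ob oc using False alm bem by (simp add: valid_idx_def)
      then show ?thesis unfolding good_def using False by (intro exI[of _ "- b * ?s / 2"] exI[of _ ?s]) auto
    next
      case True
      then show ?thesis unfolding good_def using oa[of 1] ob[of 1] oc by (intro exI[of _ "- b / 2"] exI[of _ 1]) auto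
    qed
  next
    case False
    then have "al = 1" "a = 0" using al a by auto
    then have "offd p s a al = 0" for p s by (simp add: offd_def)
    then show ?thesis unfolding good_def using ob[of 1] oc by (intro exI[of _ "- b / 2"] exI[of _ 1]) auto
  qed
next
  case False
  then have bep: "be = 1" "b = 0" using be b by auto
  have ob: "offd p s b be = 0" for p s using bep by (simp add: offd_def)
  have oc: "offd p s c 1 = 0" for p s using c by (simp add: offd_def)
  have oa: "offd (- a * (1 - al) / 4) 1 a al = 0"
    using al a by (auto simp: offd_def)
  show ?thesis unfolding good_def using oa ob oc by (intro exI[of _ "- a * (1 - al) / 4"] exI[of _ 1]) auto
qed


lemma basis: assumes "v \<noteq> (0::complex^2)"
  shows "\<exists>Q Qi. Q ** Qi = mat 1 \<and> Qi ** Q = mat 1 \<and> Q *v ev1 = v"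
proof (cases "v$1 = 0")
  case True
  then have v2: "v$2 \<noteq> 0" using assms by (auto simp: vec_eq_iff forall_2)
  let ?Q = "mat2 0 1 (v$2) 0" and ?Qi = "mat2 0 (1 / v$2) 1 0"
  have "?Q ** ?Qi = mat 1" "?Qi ** ?Q = mat 1" using v2 by (simp_all add: mat2_mult mat1_eq)
  moreover have "?Q *v ev1 = v" unfolding mulv_ev1 using True by (simp add: vec_eq_iff forall_2 mat2_nth)
  ultimately show ?thesis by blast
next
  case False
  let ?Q = "mat2 (v$1) 0 (v$2) 1" and ?Qi = "mat2 (1 / v$1) 0 (- v$2 / v$1) 1"
  have "?Q ** ?Qi = mat 1" "?Qi ** ?Q = mat 1" using False by (simp_all add: mat2_mult mat1_eq mat2_eq field_simps)
  moreover have "?Q *v ev1 = v" unfolding mulv_ev1 by (simp add: vec_eq_iff forall_2 mat2_nth)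
  ultimately show ?thesis by blast
qed

lemma conj_step:
  fixes Q Qi X :: cmat
  assumes QQi: "Q ** Qi = mat 1" and QiQ: "Qi ** Q = mat 1" and Qv: "Q *v ev1 = v" and Xv: "X *v v = v"
  shows "X ** Q = Q ** (Qi ** X ** Q)" "Qi ** X ** Q = mat2 1 ((Qi ** X ** Q)$1$2) 0 ((Qi ** X ** Q)$2$2)"
proof -
  show "X ** Q = Q ** (Qi ** X ** Q)" by (simp add: matrix_mul_assoc QQi)
  have "(Qi ** X ** Q) *v ev1 = Qi *v (X *v (Q *v ev1))" by (simp add: matrix_vector_mul_assoc matrix_mul_assoc)
  also have "\<dots> = Qi *v (Q *v ev1)" using Qv Xv by simp
  also have "\<dots> = ev1" by (simp add: matrix_vector_mul_assoc QiQ)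
  finally have e: "(Qi ** X ** Q) *v ev1 = ev1" .
  have "Qi ** X ** Q = mat2 ((Qi ** X ** Q)$1$1) ((Qi ** X ** Q)$1$2) ((Qi ** X ** Q)$2$1) ((Qi ** X ** Q)$2$2)"
    by (rule cmat_expand)
  with e show "Qi ** X ** Q = mat2 1 ((Qi ** X ** Q)$1$2) 0 ((Qi ** X ** Q)$2$2)"
    using mat2_mulv_ev1_eq by metis
qed

lemma conj_mult:
  fixes Q Qi X Y :: cmat
  assumes QQi: "Q ** Qi = mat 1"
  shows "(Qi ** X ** Q) ** (Qi ** Y ** Q) = Qi ** (X ** Y) ** Q"
proof -
  have r: "M ** Q ** Qi = M" for M :: cmat by (simp add: QQi flip: matrix_mul_assoc)
  show ?thesis by (simp add: matrix_mul_assoc r)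
qed

lemma conj_ut: "mat2 1 x 0 l ** mat2 1 p 0 s = mat2 1 p 0 s ** mat2 1 (offd p s x l) 0 l"
  by (simp add: mat2_mult mat2_eq offd_def algebra_simps)

lemma transfer_iso:
  fixes X Y M N :: cmat
  assumes "X ** M = M ** Y" "M ** N = mat 1" "N ** M = mat 1"
  shows "N ** X = Y ** N"
proof -
  have "N ** X = N ** X ** M ** N" by (simp add: assms(2) flip: matrix_mul_assoc)
  also have "\<dots> = N ** M ** Y ** N" by (simp add: assms(1) flip: matrix_mul_assoc)
  also have "\<dots> = Y ** N" by (simp add: assms(3))
  finally show ?thesis .
qed

lemma ut_rep2a: "mat2 1 a 0 al ** mat2 1 a 0 al = mat 1 \<Longrightarrow> al = 1 \<or> al = -1"
  by (rule sq1) (simp add: mat2_mult mat1_eq mat2_eq)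
lemma ut_rep2b: "mat2 1 a 0 al ** mat2 1 a 0 al = mat 1 \<Longrightarrow> a * (1 + al) = 0"
  by (simp add: mat2_mult mat1_eq mat2_eq algebra_simps)

lemma ut_rep3: "mat2 1 c 0 g ** mat2 1 c 0 g ** mat2 1 c 0 g = mat 1 \<Longrightarrow> g ^ 3 = 1 \<and> c * (1 + g + g * g) = 0"
  unfolding mat2_mult mat1_eq mat2_eq by (simp add: power3_eq_cube algebra_simps)


lemma good_all:
  assumes "mat2 1 a 0 al ** mat2 1 a 0 al = mat 1" "mat2 1 b 0 be ** mat2 1 b 0 be = mat 1"
    "mat2 1 c 0 ga ** mat2 1 c 0 ga ** mat2 1 c 0 ga = mat 1"
  shows "good a al b be c ga"
proof -
  note A = ut_rep2a[OF assms(1)] ut_rep2b[OF assms(1)]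
  note B = ut_rep2a[OF assms(2)] ut_rep2b[OF assms(2)]
  note C = ut_rep3[OF assms(3)]
  consider "ga = 1" | "ga = zeta \<or> ga = zeta^2" using cube_root C by blast
  then show ?thesis
  proof cases
    case 1
    then have "c = 0" using C by simp
    then show ?thesis using good_1 A B 1 by blast
  next
    case 2
    then show ?thesis using good_split_ne1 A B by blast
  qed
qed

lemma part2:
  assumes ns: "nonsplit_ext_of_trivial \<rho>"
  shows "\<exists>i. valid_idx i \<and> iso_rep \<rho> (listed_rep i)"
proof -
  obtain A B C where rho: "\<rho> = (A, B, C)" by (metis prod_cases3)
  have rep: "A ** A = mat 1" "B ** B = mat 1" "C ** C ** C = mat 1"
    using ns unfolding rho nonsplit_ext_of_trivial_def is_rep_def by auto
  obtain v where v: "v \<noteq> 0" "A *v v = v" "B *v v = v" "C *v v = v"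
    using ns unfolding rho nonsplit_ext_of_trivial_def has_trivial_sub_def by auto
  have nd: "\<not> decomposable (A, B, C)" using ns unfolding rho nonsplit_ext_of_trivial_def by auto
  obtain Q Qi where Q: "Q ** Qi = mat 1" "Qi ** Q = mat 1" "Q *v ev1 = v" using basis[OF v(1)] by blast
  define A' where "A' = Qi ** A ** Q"
  define B' where "B' = Qi ** B ** Q"
  define C' where "C' = Qi ** C ** Q"
  note sA = conj_step[OF Q v(2), folded A'_def]
  note sB = conj_step[OF Q v(3), folded B'_def]
  note sC = conj_step[OF Q v(4), folded C'_def]
  define a where "a = A'$1$2"
  define al where "al = A'$2$2"
  define b where "b = B'$1$2"
  define be where "be = B'$2$2"
  define c where "c = C'$1$2"
  define ga where "ga = C'$2$2"
  have Ae: "A' = mat2 1 a 0 al" using sA(2) a_def al_def by simp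
  have Be: "B' = mat2 1 b 0 be" using sB(2) b_def be_def by simp
  have Ce: "C' = mat2 1 c 0 ga" using sC(2) c_def ga_def by simp
  have one: "Qi ** mat 1 ** Q = mat 1" using Q(2) by simp
  have r1: "mat2 1 a 0 al ** mat2 1 a 0 al = mat 1"
    unfolding Ae[symmetric] A'_def conj_mult[OF Q(1)] rep(1) one ..
  have r2: "mat2 1 b 0 be ** mat2 1 b 0 be = mat 1"
    unfolding Be[symmetric] B'_def conj_mult[OF Q(1)] rep(2) one ..
  have r3: "mat2 1 c 0 ga ** mat2 1 c 0 ga ** mat2 1 c 0 ga = mat 1"
    unfolding Ce[symmetric] C'_def conj_mult[OF Q(1)] rep(3) one ..
  obtain p s where s: "s \<noteq> 0" and alt: "(\<exists>i. valid_idx i \<and> listed_rep i = (mat2 1 (offd p s a al) 0 al, mat2 1 (offd p s b be) 0 be, mat2 1 (offd p s c ga) 0 ga))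
      \<or> (offd p s a al = 0 \<and> offd p s b be = 0 \<and> offd p s c ga = 0)"
    using good_all[OF r1 r2 r3] unfolding good_def by blast
  define P where "P = mat2 1 p 0 s"
  define Pi where "Pi = mat2 1 (- p / s) 0 (1 / s)"
  have PPi: "P ** Pi = mat 1" "Pi ** P = mat 1" using s unfolding P_def Pi_def
    by (simp_all add: mat2_mult mat1_eq mat2_eq field_simps)
  define M where "M = Q ** P"
  define N where "N = Pi ** Qi"
  have MN: "M ** N = mat 1" unfolding M_def N_def
    by (metis PPi(1) Q(1) matrix_mul_assoc matrix_mul_rid)
  have NM: "N ** M = mat 1" unfolding M_def N_def
    by (metis PPi(2) Q(2) matrix_mul_assoc matrix_mul_rid)
  have invN: "invertible N" "invertible M" unfolding invertible_def using MN NM by blast+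
  have cj: "X ** M = M ** mat2 1 (offd p s x l) 0 l" if "X ** Q = Q ** mat2 1 x 0 l" for X x l
  proof -
    have "X ** M = Q ** mat2 1 x 0 l ** P" unfolding M_def by (simp add: matrix_mul_assoc that)
    also have "\<dots> = Q ** (P ** mat2 1 (offd p s x l) 0 l)" unfolding P_def conj_ut[symmetric]
      by (simp add: matrix_mul_assoc)
    also have "\<dots> = M ** mat2 1 (offd p s x l) 0 l" unfolding M_def by (simp add: matrix_mul_assoc)
    finally show ?thesis .
  qed
  have cA: "A ** M = M ** mat2 1 (offd p s a al) 0 al" using cj sA(1) Ae by simp
  have cB: "B ** M = M ** mat2 1 (offd p s b be) 0 be" using cj sB(1) Be by simp
  have cC: "C ** M = M ** mat2 1 (offd p s c ga) 0 ga" using cj sC(1) Ce by simp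
  show ?thesis
  proof (cases "\<exists>i. valid_idx i \<and> listed_rep i = (mat2 1 (offd p s a al) 0 al, mat2 1 (offd p s b be) 0 be, mat2 1 (offd p s c ga) 0 ga)")
    case True
    then obtain i where i: "valid_idx i" "listed_rep i = (mat2 1 (offd p s a al) 0 al, mat2 1 (offd p s b be) 0 be, mat2 1 (offd p s c ga) 0 ga)" by blast
    have "iso_rep \<rho> (listed_rep i)" unfolding rho i(2) iso_rep_def prod.case
      using invN(1) transfer_iso[OF cA MN NM] transfer_iso[OF cB MN NM] transfer_iso[OF cC MN NM] by blast
    then show ?thesis using i(1) by blast
  next
    case False
    then have z: "offd p s a al = 0" "offd p s b be = 0" "offd p s c ga = 0" using alt by auto
    have mi: "matrix_inv M ** M = mat 1" using matrix_inv_props[OF invN(2)] by simp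
    have dg: "is_diag (matrix_inv M ** X ** M)" if "X ** M = M ** mat2 1 0 0 l" for X l
    proof -
      have "matrix_inv M ** X ** M = matrix_inv M ** M ** mat2 1 0 0 l" by (simp add: that flip: matrix_mul_assoc)
      also have "\<dots> = mat2 1 0 0 l" using mi by simp
      finally show ?thesis by (simp add: is_diag_def mat2_nth)
    qed
    have "decomposable (A, B, C)" unfolding decomposable_def prod.case
      using invN(2) dg cA cB cC z by metis
    then show ?thesis using nd by blast
  qed
qed


theorem proposition6p3:
  shows "(\<forall>i. valid_idx i \<longrightarrow>
            nonsplit_ext_of_trivial (listed_rep i) \<and> ext_in_basis (listed_rep i) (listed_quot i))
       \<and> (\<forall>\<rho>. nonsplit_ext_of_trivial \<rho> \<longrightarrow> (\<exists>i. valid_idx i \<and> iso_rep \<rho> (listed_rep i)))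
       \<and> (\<forall>i j. valid_idx i \<longrightarrow> valid_idx j \<longrightarrow> iso_rep (listed_rep i) (listed_rep j) \<longrightarrow> i = j)"
  using part1 part2 part3 by blast

end
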